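(* Let $x,z\in X^c$. Then $(F_x,\phi_x)\cong(F_z,\phi_z)$ as extended representation graphs if and only if $x\sim_c z$.
   Context: $E=(E^0,E^1,s,r)$ is a row-finite directed graph; for each vertex $v$ emitting an edge a fixed edge $e^v\in s^{-1}(v)$ is called special, others nonspecial. The double graph $E_d$ has vertices $E^0$ and edges $e$ (real) and $e^*$ (ghost) for $e\in E^1$, with $s_d(e)=s(e),r_d(e)=r(e),s_d(e^* )=r(e),r_d(e^* )=s(e)$. For a path $p=e_1\dots e_n$ set $p^*=e_n^*\dots e_1^*$. The set $X$ of basis paths consists of the paths in $E_d$: vertices; $p,p^*$ for paths $p$ of length $\ge1$ in $E$; $pq^*$ with $p=e_1\dots e_k,q=f_1\dots f_n$ of length $\ge1$ in $E$, $r(p)=r(q)$, and $e_k\ne f_n$ or $e_k=f_n$ nonspecial. $X^c$ is the set of closed paths of length $\ge1$ in $E_d$ consisting only of real edges or only of ghost edges (equivalently, finite basis paths $x$ with $x^2$ a basis path). $x_1\dots x_m\sim_c y_1\dots y_n$ iff $x_1\dots x_m=y_{k+1}\dots y_ny_1\dots y_k$ for some $1\le k\le n$. An extended representation graph for $E$ is a pair $(F,\phi)$, $F$ a directed graph, $\phi:F\to E_d$ a graph homomorphism, such that for every $w\in F^0$: (i) $w$ is a source or receives exactly one edge $f_w$; (ii) if $w$ is a source or $\phi(f_w)$ is a nonspecial real edge, $\phi$ maps $s^{-1}(w)$ bijectively onto $s_d^{-1}(\phi(w))$; (iii) if $\phi(f_w)$ is a special real edge, onto $s_d^{-1}(\phi(w))\setminus\{\phi(f_w)^*\}$;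 (iv) if $\phi(f_w)$ is a ghost edge, onto the ghost edges in $s_d^{-1}(\phi(w))$. An isomorphism $(F,\phi)\to(G,\psi)$ is a graph isomorphism $\alpha$ with $\psi\circ\alpha=\phi$. $(F_x,\phi_x)$ for $x=x_1\dots x_m\in X^c$: for $1\le i\le m$, $X_i$ = basis paths $y=y_1\dots y_n$, $n\ge1$, with $x_iy_1$ a basis path and $y_1\ne x_{i+1}$ ($x_{m+1}=x_1$). Vertices $w_i$ ($1\le i\le m$), $w_{i,y}$ ($y\in X_i$), all distinct; edges $f_i$ from $w_{i-1}$ to $w_i$ ($w_0=w_m$), and $f_{i,y}$ to $w_{i,y}$ from $w_i$ if $|y|=1$, from $w_{i,y_1\dots y_{n-1}}$ if $n\ge2$; $\phi_x(w_i)=r_d(x_i)$, $\phi_x(w_{i,y})=r_d(y)$, $\phi_x(f_i)=x_i$, $\phi_x(f_{i,y})=$ last edge of $y$. *)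

theory Defs
  imports Main
begin

text \<open>A directed graph E is given by its vertex type 'v, edge type 'e and the
  source/range maps s, r.  The choice of special edges is a map sp :: 'v => 'e.\<close>

definition row_finite :: "('e \<Rightarrow> 'v) \<Rightarrow> bool" where
  "row_finite s \<longleftrightarrow> (\<forall>v. finite {e. s e = v})"

definition special_choice :: "('e \<Rightarrow> 'v) \<Rightarrow> ('v \<Rightarrow> 'e) \<Rightarrow> bool" where
  "special_choice s sp \<longleftrightarrow> (\<forall>v. (\<exists>e. s e = v) \<longrightarrow> s (sp v) = v)"

definition special :: "('e \<Rightarrow> 'v) \<Rightarrow> ('v \<Rightarrow> 'e) \<Rightarrow> 'e \<Rightarrow> bool" where
  "special s sp e \<longleftrightarrow> e = sp (s e)"

datatype 'e dedge = Real 'e | Ghost 'e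

fun sd :: "('e \<Rightarrow> 'v) \<Rightarrow> ('e \<Rightarrow> 'v) \<Rightarrow> 'e dedge \<Rightarrow> 'v" where
  "sd s r (Real e) = s e"
| "sd s r (Ghost e) = r e"

fun rd :: "('e \<Rightarrow> 'v) \<Rightarrow> ('e \<Rightarrow> 'v) \<Rightarrow> 'e dedge \<Rightarrow> 'v" where
  "rd s r (Real e) = r e"
| "rd s r (Ghost e) = s e"

fun is_real :: "'e dedge \<Rightarrow> bool" where
  "is_real (Real e) = True"
| "is_real (Ghost e) = False"

definition dpath :: "('e \<Rightarrow> 'v) \<Rightarrow> ('e \<Rightarrow> 'v) \<Rightarrow> 'e dedge list \<Rightarrow> bool" where
  "dpath s r xs \<longleftrightarrow> xs \<noteq> [] \<and>
     (\<forall>i. Suc i < length xs \<longrightarrow> rd s r (xs ! i) = sd s r (xs ! Suc i))"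

text \<open>Basis paths of length >= 1: p, p^*, or p q^* (p = e_1..e_k, q = f_1..f_n,
  p q^* = e_1..e_k f_n^*..f_1^*) with e_k \<noteq> f_n or e_k = f_n nonspecial.
  (Vertices, the length-0 basis paths, never occur below.)\<close>
definition basis_path :: "('e \<Rightarrow> 'v) \<Rightarrow> ('e \<Rightarrow> 'v) \<Rightarrow> ('v \<Rightarrow> 'e) \<Rightarrow> 'e dedge list \<Rightarrow> bool" where
  "basis_path s r sp xs \<longleftrightarrow> dpath s r xs \<and>
     (\<exists>p q. xs = map Real p @ map Ghost (rev q) \<and>
        (p \<noteq> [] \<and> q \<noteq> [] \<longrightarrow> last p \<noteq> last q \<or> \<not> special s sp (last p)))"

definition Xc :: "('e \<Rightarrow> 'v) \<Rightarrow> ('e \<Rightarrow> 'v) \<Rightarrow> 'e dedge list set" where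
  "Xc s r = {xs. dpath s r xs \<and> sd s r (hd xs) = rd s r (last xs) \<and>
                 ((\<forall>e\<in>set xs. is_real e) \<or> (\<forall>e\<in>set xs. \<not> is_real e))}"

definition cyc_equiv :: "'a list \<Rightarrow> 'a list \<Rightarrow> bool" where
  "cyc_equiv xs ys \<longleftrightarrow> (\<exists>k. 1 \<le> k \<and> k \<le> length ys \<and> xs = drop k ys @ take k ys)"

record ('a, 'b, 'v, 'e) rgraph =
  gV :: "'a set"
  gE :: "'b set"
  gsrc :: "'b \<Rightarrow> 'a"
  gtgt :: "'b \<Rightarrow> 'a"
  phiV :: "'a \<Rightarrow> 'v"
  phiE :: "'b \<Rightarrow> 'e dedge"

definition ext_rep_graph :: "('e \<Rightarrow> 'v) \<Rightarrow> ('e \<Rightarrow> 'v) \<Rightarrow> ('v \<Rightarrow> 'e)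
    \<Rightarrow> ('a, 'b, 'v, 'e) rgraph \<Rightarrow> bool" where
  "ext_rep_graph s r sp F \<longleftrightarrow>
     (\<forall>f\<in>gE F. gsrc F f \<in> gV F \<and> gtgt F f \<in> gV F
        \<and> sd s r (phiE F f) = phiV F (gsrc F f) \<and> rd s r (phiE F f) = phiV F (gtgt F f)) \<and>
     (\<forall>w\<in>gV F.
        let In = {f\<in>gE F. gtgt F f = w}; Out = {f\<in>gE F. gsrc F f = w};
            T = {d. sd s r d = phiV F w} in
        (In = {} \<and> bij_betw (phiE F) Out T) \<or>
        (\<exists>fw. In = {fw} \<and>
           (case phiE F fw of
              Real e \<Rightarrow> (if special s sp e then bij_betw (phiE F) Out (T - {Ghost e})
                         else bij_betw (phiE F) Out T)
            | Ghost e \<Rightarrow> bij_betw (phiE F) Out {d\<in>T. \<not> is_real d})))"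

definition erg_iso :: "('a, 'b, 'v, 'e) rgraph \<Rightarrow> ('c, 'd, 'v, 'e) rgraph \<Rightarrow> bool" where
  "erg_iso F G \<longleftrightarrow> (\<exists>aV aE. bij_betw aV (gV F) (gV G) \<and> bij_betw aE (gE F) (gE G) \<and>
     (\<forall>f\<in>gE F. gsrc G (aE f) = aV (gsrc F f) \<and> gtgt G (aE f) = aV (gtgt F f)) \<and>
     (\<forall>w\<in>gV F. phiV G (aV w) = phiV F w) \<and>
     (\<forall>f\<in>gE F. phiE G (aE f) = phiE F f))"

text \<open>Construction of (F_x, phi_x), with 0-based indices:
  W i stands for w_{i+1}, WY i y for w_{i+1,y}, Fi i for f_{i+1}, FY i y for f_{i+1,y}.\<close>
datatype 'e fvert = W nat | WY nat "'e dedge list"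
datatype 'e fedge = Fi nat | FY nat "'e dedge list"

definition Xi :: "('e \<Rightarrow> 'v) \<Rightarrow> ('e \<Rightarrow> 'v) \<Rightarrow> ('v \<Rightarrow> 'e) \<Rightarrow> 'e dedge list \<Rightarrow> nat
    \<Rightarrow> 'e dedge list set" where
  "Xi s r sp x i = {y. basis_path s r sp y \<and> basis_path s r sp [x ! i, hd y]
                      \<and> hd y \<noteq> x ! (Suc i mod length x)}"

definition Fx :: "('e \<Rightarrow> 'v) \<Rightarrow> ('e \<Rightarrow> 'v) \<Rightarrow> ('v \<Rightarrow> 'e) \<Rightarrow> 'e dedge list
    \<Rightarrow> ('e fvert, 'e fedge, 'v, 'e) rgraph" where
  "Fx s r sp x = (let m = length x in
     \<lparr> gV = {W i | i. i < m} \<union> {WY i y | i y. i < m \<and> y \<in> Xi s r sp x i},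
       gE = {Fi i | i. i < m} \<union> {FY i y | i y. i < m \<and> y \<in> Xi s r sp x i},
       gsrc = (\<lambda>f. case f of Fi i \<Rightarrow> W ((i + m - 1) mod m)
                   | FY i y \<Rightarrow> (if length y = 1 then W i else WY i (butlast y))),
       gtgt = (\<lambda>f. case f of Fi i \<Rightarrow> W i | FY i y \<Rightarrow> WY i y),
       phiV = (\<lambda>w. case w of W i \<Rightarrow> rd s r (x ! i) | WY i y \<Rightarrow> rd s r (last y)),
       phiE = (\<lambda>f. case f of Fi i \<Rightarrow> x ! i | FY i y \<Rightarrow> last y) \<rparr>)"

end

theory Submission
  imports Defs
begin

lemma Fx_simps:
  "gV (Fx s r sp x) = {W i | i. i < length x} \<union> {WY i y | i y. i < length x \<and> y \<in> Xi s r sp x i}"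
  "gE (Fx s r sp x) = {Fi i | i. i < length x} \<union> {FY i y | i y. i < length x \<and> y \<in> Xi s r sp x i}"
  "gsrc (Fx s r sp x) (Fi i) = W ((i + length x - 1) mod length x)"
  "gsrc (Fx s r sp x) (FY i y) = (if length y = 1 then W i else WY i (butlast y))"
  "gtgt (Fx s r sp x) (Fi i) = W i"
  "gtgt (Fx s r sp x) (FY i y) = WY i y"
  "phiV (Fx s r sp x) (W i) = rd s r (x ! i)"
  "phiV (Fx s r sp x) (WY i y) = rd s r (last y)"
  "phiE (Fx s r sp x) (Fi i) = x ! i"
  "phiE (Fx s r sp x) (FY i y) = last y"
  by (simp_all add: Fx_def Let_def)

lemma shift_inv:
  fixes n k i :: nat
  assumes "0 < n" "i < n"
  shows "((i + k) mod n + (n - k mod n)) mod n = i"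
    and "((i + (n - k mod n)) mod n + k) mod n = i"
proof -
  define q where "q = k div n"
  define t where "t = k mod n"
  have k: "k = n * q + t" by (simp add: q_def t_def)
  have tn: "t < n" using assms by (simp add: t_def)
  have e: "i + k + (n - t) = i + Suc q * n" using k tn by simp
  have "((i + k) mod n + (n - k mod n)) mod n = (i + k + (n - t)) mod n"
    by (simp add: mod_add_left_eq t_def)
  also have "\<dots> = i" unfolding e mod_mult_self1 using assms by simp
  finally show "((i + k) mod n + (n - k mod n)) mod n = i" .
  have "((i + (n - k mod n)) mod n + k) mod n = (i + k + (n - t)) mod n"
    unfolding mod_add_left_eq t_def by (simp add: ac_simps)
  also have "\<dots> = i" unfolding e mod_mult_self1 using assms by simp
  finally show "((i + (n - k mod n)) mod n + k) mod n = i" .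
qed

lemma Xi_shift:
  assumes n: "length x = length z" "0 < length z"
    and xz: "\<forall>i<length z. x ! i = z ! ((i + k) mod length z)"
    and i: "i < length z"
  shows "Xi s r sp x i = Xi s r sp z ((i + k) mod length z)"
proof -
  let ?n = "length z"
  have a: "x ! i = z ! ((i + k) mod ?n)" using xz i by simp
  have "x ! (Suc i mod ?n) = z ! ((Suc i mod ?n + k) mod ?n)" using xz n by simp
  also have "(Suc i mod ?n + k) mod ?n = Suc ((i + k) mod ?n) mod ?n"
    by (simp add: mod_add_left_eq mod_Suc_eq)
  finally show ?thesis unfolding Xi_def using a n by simp
qed

lemma shift_iso:
  fixes x z :: "'e dedge list" and s r :: "'e \<Rightarrow> 'v"
  assumes n: "length x = length z" "0 < length z"
    and xz: "\<forall>i<length z. x ! i = z ! ((i + k) mod length z)"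
  shows "erg_iso (Fx s r sp x) (Fx s r sp z)"
proof -
  let ?n = "length z"
  define sh where "sh i = (i + k) mod ?n" for i
  define ish where "ish i = (i + (?n - k mod ?n)) mod ?n" for i
  have sh1: "ish (sh i) = i" if "i < ?n" for i using shift_inv(1)[OF n(2) that] sh_def ish_def by simp
  have sh2: "sh (ish i) = i" if "i < ?n" for i using shift_inv(2)[OF n(2) that] sh_def ish_def by simp
  have shlt: "sh i < ?n" "ish i < ?n" for i using n sh_def ish_def by auto
  have X1: "Xi s r sp x i = Xi s r sp z (sh i)" if "i < ?n" for i
    using Xi_shift[OF n xz that] sh_def by simp
  have X2: "Xi s r sp z j = Xi s r sp x (ish j)" if "j < ?n" for j
    using X1[of "ish j"] sh2[OF that] shlt by simp
  define aV :: "'e fvert \<Rightarrow> 'e fvert" where "aV v = (case v of W i \<Rightarrow> W (sh i) | WY i y \<Rightarrow> WY (sh i) y)" for v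
  define bV :: "'e fvert \<Rightarrow> 'e fvert" where "bV v = (case v of W i \<Rightarrow> W (ish i) | WY i y \<Rightarrow> WY (ish i) y)" for v
  define aE :: "'e fedge \<Rightarrow> 'e fedge" where "aE v = (case v of Fi i \<Rightarrow> Fi (sh i) | FY i y \<Rightarrow> FY (sh i) y)" for v
  define bE :: "'e fedge \<Rightarrow> 'e fedge" where "bE v = (case v of Fi i \<Rightarrow> Fi (ish i) | FY i y \<Rightarrow> FY (ish i) y)" for v
  have "bij_betw aV (gV (Fx s r sp x)) (gV (Fx s r sp z))"
  proof (rule bij_betw_byWitness[where f'=bV], goal_cases)
    case 1 show ?case using sh1 n by (auto simp: Fx_simps aV_def bV_def)
  next
    case 2 show ?case using sh2 by (auto simp: Fx_simps aV_def bV_def)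
  next
    case 3 show ?case using shlt X1 n by (auto simp: Fx_simps aV_def)
  next
    case 4 show ?case using shlt X2 n by (auto simp: Fx_simps bV_def)
  qed
  moreover have "bij_betw aE (gE (Fx s r sp x)) (gE (Fx s r sp z))"
  proof (rule bij_betw_byWitness[where f'=bE], goal_cases)
    case 1 show ?case using sh1 n by (auto simp: Fx_simps aE_def bE_def)
  next
    case 2 show ?case using sh2 by (auto simp: Fx_simps aE_def bE_def)
  next
    case 3 show ?case using shlt X1 n by (auto simp: Fx_simps aE_def)
  next
    case 4 show ?case using shlt X2 n by (auto simp: Fx_simps bE_def)
  qed
  moreover have "\<forall>f\<in>gE (Fx s r sp x). gsrc (Fx s r sp z) (aE f) = aV (gsrc (Fx s r sp x) f) \<and>
      gtgt (Fx s r sp z) (aE f) = aV (gtgt (Fx s r sp x) f)"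
  proof
    fix f assume "f \<in> gE (Fx s r sp x)"
    have n1: "1 \<le> ?n" using n by (simp add: Suc_leI)
    have e: "(sh i + ?n - 1) mod ?n = sh ((i + ?n - 1) mod ?n)" for i
    proof -
      have "(sh i + ?n - 1) mod ?n = ((i + k) mod ?n + (?n - 1)) mod ?n" using n sh_def by (simp only: add_diff_assoc[OF n1])
      also have "\<dots> = (i + k + (?n - 1)) mod ?n" by (simp add: mod_add_left_eq)
      also have "\<dots> = ((i + (?n - 1)) mod ?n + k) mod ?n" unfolding mod_add_left_eq by (simp add: ac_simps)
      also have "\<dots> = sh ((i + ?n - 1) mod ?n)" using n sh_def by (simp only: add_diff_assoc[OF n1])
      finally show ?thesis .
    qed
    show "gsrc (Fx s r sp z) (aE f) = aV (gsrc (Fx s r sp x) f) \<and>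
      gtgt (Fx s r sp z) (aE f) = aV (gtgt (Fx s r sp x) f)"
      using n e by (cases f) (auto simp: Fx_simps aE_def aV_def)
  qed
  moreover have "\<forall>w\<in>gV (Fx s r sp x). phiV (Fx s r sp z) (aV w) = phiV (Fx s r sp x) w"
    using xz n by (auto simp: Fx_simps aV_def sh_def)
  moreover have "\<forall>f\<in>gE (Fx s r sp x). phiE (Fx s r sp z) (aE f) = phiE (Fx s r sp x) f"
    using xz n by (auto simp: Fx_simps aE_def sh_def)
  ultimately show ?thesis unfolding erg_iso_def by blast
qed


fun Pz :: "nat \<Rightarrow> 'e fvert \<Rightarrow> 'e fvert" where
  "Pz n (W j) = W ((j + n - 1) mod n)"
| "Pz n (WY j y) = (if length y = 1 then W j else WY j (butlast y))"

lemma src_Pz: "gsrc (Fx s r sp z) f = Pz (length z) (gtgt (Fx s r sp z) f)"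
  by (cases f) (simp_all add: Fx_simps)

lemma Pz_inv:
  assumes "y \<noteq> []" "1 \<le> k"
  shows "(\<exists>t. (Pz n ^^ k) (WY j y) = W t) \<or>
         (\<exists>y'. (Pz n ^^ k) (WY j y) = WY j y' \<and> y' \<noteq> [] \<and> length y' < length y)"
  using assms(2)
proof (induction k)
  case 0 then show ?case by simp
next
  case (Suc k)
  show ?case
  proof (cases "k = 0")
    case True
    then show ?thesis using assms(1)
      by (cases y rule: rev_cases) auto
  next
    case False
    then have "(\<exists>t. (Pz n ^^ k) (WY j y) = W t) \<or>
         (\<exists>y'. (Pz n ^^ k) (WY j y) = WY j y' \<and> y' \<noteq> [] \<and> length y' < length y)"
      using Suc by simp
    then show ?thesis
    proof
      assume "\<exists>t. (Pz n ^^ k) (WY j y) = W t"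
      then show ?thesis by auto
    next
      assume "\<exists>y'. (Pz n ^^ k) (WY j y) = WY j y' \<and> y' \<noteq> [] \<and> length y' < length y"
      then obtain y' where y': "(Pz n ^^ k) (WY j y) = WY j y'" "y' \<noteq> []" "length y' < length y" by blast
      then show ?thesis by (cases y' rule: rev_cases) auto
    qed
  qed
qed

lemma Pz_noret:
  assumes "y \<noteq> []" "1 \<le> k"
  shows "(Pz n ^^ k) (WY j y) \<noteq> WY j y"
  using Pz_inv[OF assms, of n j] by auto

lemma g_iter:
  fixes m i :: nat
  assumes "i < m"
  shows "((\<lambda>i. (i + m - 1) mod m) ^^ k) i = (i + k * (m - 1)) mod m"
proof (induction k)
  case 0 then show ?case using assms by simp
next
  case (Suc k)
  have m1: "1 \<le> m" using assms by simp
  have "((\<lambda>i. (i + m - 1) mod m) ^^ Suc k) i = ((i + k * (m - 1)) mod m + m - 1) mod m"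
    using Suc by simp
  also have "\<dots> = ((i + k * (m - 1)) mod m + (m - 1)) mod m"
    by (simp only: add_diff_assoc[OF m1])
  also have "\<dots> = (i + k * (m - 1) + (m - 1)) mod m" by (simp add: mod_add_left_eq)
  also have "\<dots> = (i + Suc k * (m - 1)) mod m" by (metis add.assoc add.commute mult_Suc)
  finally show ?case .
qed

lemma g_period:
  fixes m i :: nat
  assumes "i < m"
  shows "((\<lambda>i. (i + m - 1) mod m) ^^ m) i = i"
proof -
  have "(i + m * (m - 1)) mod m = i" using assms by simp
  then show ?thesis using g_iter[OF assms, of m] by (simp add: mult.commute)
qed

lemma basis_nonempty: "basis_path s r sp y \<Longrightarrow> y \<noteq> []"
  by (simp add: basis_path_def dpath_def)

lemma iso_cyc:
  fixes x z :: "'e dedge list" and s r :: "'e \<Rightarrow> 'v"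
  assumes xne: "x \<noteq> []" and zne: "z \<noteq> []"
    and iso: "erg_iso (Fx s r sp x) (Fx s r sp z)"
  shows "cyc_equiv x z"
proof -
  let ?m = "length x" and ?n = "length z"
  let ?FX = "Fx s r sp x" and ?FZ = "Fx s r sp z"
  define g where "g i = (i + ?m - 1) mod ?m" for i
  have m1: "1 \<le> ?m" and n1: "1 \<le> ?n" using xne zne by (simp_all add: Suc_leI)
  obtain aV aE where bV: "bij_betw aV (gV ?FX) (gV ?FZ)" and bE: "bij_betw aE (gE ?FX) (gE ?FZ)"
    and hom: "\<forall>f\<in>gE ?FX. gsrc ?FZ (aE f) = aV (gsrc ?FX f) \<and> gtgt ?FZ (aE f) = aV (gtgt ?FX f)"
    and phE: "\<forall>f\<in>gE ?FX. phiE ?FZ (aE f) = phiE ?FX f"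
    using iso unfolding erg_iso_def by blast
  have FiX: "Fi i \<in> gE ?FX" if "i < ?m" for i using that by (simp add: Fx_simps)
  have WX: "W i \<in> gV ?FX" if "i < ?m" for i using that by (simp add: Fx_simps)
  have glt: "g i < ?m" for i using xne g_def by simp
  have step: "aV (W (g i)) = Pz ?n (aV (W i))" if "i < ?m" for i
  proof -
    have "gsrc ?FZ (aE (Fi i)) = aV (W (g i))" "gtgt ?FZ (aE (Fi i)) = aV (W i)"
      using hom FiX[OF that] by (simp_all add: Fx_simps g_def)
    then show ?thesis using src_Pz[of s r sp z "aE (Fi i)"] by simp
  qed
  have iter: "aV (W ((g ^^ k) i)) = (Pz ?n ^^ k) (aV (W i)) \<and> (g ^^ k) i < ?m" if "i < ?m" for i k
  proof (induction k)
    case 0 then show ?case using that by simp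
  next
    case (Suc k) then show ?case using step glt by simp
  qed
  have gper: "(g ^^ ?m) i = i" if "i < ?m" for i
  proof -
    have "g = (\<lambda>i. (i + ?m - 1) mod ?m)" using g_def by auto
    then show ?thesis using g_period[OF that] by simp
  qed
  have isW: "\<exists>j<?n. aV (W i) = W j" if "i < ?m" for i
  proof -
    have mem: "aV (W i) \<in> gV ?FZ" using bij_betw_apply[OF bV WX[OF that]] .
    have per: "aV (W i) = (Pz ?n ^^ ?m) (aV (W i))"
      using iter[OF that, of ?m] gper[OF that] by simp
    show ?thesis
    proof (cases "aV (W i)")
      case (W j) then show ?thesis using mem by (auto simp: Fx_simps)
    next
      case (WY j y)
      then have "y \<in> Xi s r sp z j" using mem by (auto simp: Fx_simps)
      then have "y \<noteq> []" using basis_nonempty by (auto simp: Xi_def)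
      then show ?thesis using per WY Pz_noret[of y ?m ?n j] m1 by simp
    qed
  qed
  have "\<forall>i. \<exists>j. i < ?m \<longrightarrow> j < ?n \<and> aV (W i) = W j" using isW by blast
  from choice[OF this] obtain \<sigma> where sig0: "\<forall>i. i < ?m \<longrightarrow> \<sigma> i < ?n \<and> aV (W i) = W (\<sigma> i)"
    by blast
  have sig: "\<sigma> i < ?n \<and> aV (W i) = W (\<sigma> i)" if "i < ?m" for i using sig0 that by blast
  have edge: "aE (Fi i) = Fi (\<sigma> i)" if "i < ?m" for i
  proof -
    have mem: "aE (Fi i) \<in> gE ?FZ" using bij_betw_apply[OF bE FiX[OF that]] .
    have "gtgt ?FZ (aE (Fi i)) = W (\<sigma> i)" using hom FiX[OF that] sig[OF that] by (simp add: Fx_simps)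
    then show ?thesis using mem by (cases "aE (Fi i)") (auto simp: Fx_simps)
  qed
  have xz: "x ! i = z ! (\<sigma> i)" if "i < ?m" for i
    using bspec[OF phE FiX[OF that]] edge[OF that] by (simp add: Fx_simps)
  have src: "\<sigma> (g i) = (\<sigma> i + ?n - 1) mod ?n" if "i < ?m" for i
  proof -
    have "gsrc ?FZ (aE (Fi i)) = aV (W (g i))"
      using hom FiX[OF that] by (simp add: Fx_simps g_def)
    then show ?thesis using edge[OF that] sig[OF glt[of i]] by (simp add: Fx_simps)
  qed
  have rec: "\<sigma> (Suc i) = Suc (\<sigma> i) mod ?n" if "Suc i < ?m" for i
  proof -
    have "g (Suc i) = i" using that g_def by simp
    then have e: "\<sigma> i = (\<sigma> (Suc i) + ?n - 1) mod ?n" using src[OF that] by simp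
    have a: "\<sigma> (Suc i) < ?n" using sig[OF that] by simp
    show ?thesis
    proof (cases "\<sigma> (Suc i) = 0")
      case True
      then have "\<sigma> i = ?n - 1" using e n1 by simp
      then have "Suc (\<sigma> i) = ?n" using n1 by simp
      then show ?thesis using True by simp
    next
      case False
      then obtain a' where a': "\<sigma> (Suc i) = Suc a'" using not0_implies_Suc by blast
      then have "\<sigma> i = (a' + ?n) mod ?n" using e by simp
      then have "\<sigma> i = a'" using a a' by simp
      then show ?thesis using a a' by simp
    qed
  qed
  define j where "j = \<sigma> 0"
  have j: "j < ?n" using sig[of 0] xne j_def by simp
  have closed: "\<sigma> i = (j + i) mod ?n" if "i < ?m" for i
    using that
  proof (induction i)
    case 0 then show ?case using j j_def by simp
  next
    case (Suc i)
    then show ?case using rec[OF Suc.prems] by (simp add: mod_Suc_eq)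
  qed
  have mn: "?m \<le> ?n"
  proof (rule ccontr)
    assume "\<not> ?m \<le> ?n"
    then have lt: "?n < ?m" by simp
    have "\<sigma> ?n = j" using closed[OF lt] j by simp
    then have "aV (W ?n) = aV (W 0)" using sig[OF lt] sig[of 0] xne j_def by simp
    moreover have "inj_on aV (gV ?FX)" using bV bij_betw_imp_inj_on by blast
    ultimately have "W ?n = W 0" using inj_onD WX[OF lt] WX[of 0] xne by fastforce
    then show False using zne by simp
  qed
  have "g 0 = ?m - 1" using g_def m1 by simp
  then have "(j + (?m - 1)) mod ?n = (j + ?n - 1) mod ?n"
    using src[of 0] closed[of "?m - 1"] closed[of 0] xne j by simp
  then have "(j + ?n - 1) mod ?n = (j + (?m - 1)) mod ?n" by simp
  then have "?n dvd (j + ?n - 1) - (j + (?m - 1))"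
    using mod_eq_dvd_iff_nat[of "j + (?m - 1)" "j + ?n - 1" ?n] mn m1 by simp
  moreover have "(j + ?n - 1) - (j + (?m - 1)) = ?n - ?m" using mn m1 by simp
  ultimately have "?n dvd ?n - ?m" by simp
  moreover have "?n - ?m < ?n" using m1 n1 by simp
  ultimately have "?n - ?m = 0" using nat_dvd_not_less by blast
  then have mneq: "?m = ?n" using mn by simp
  have xrot: "x = rotate j z"
  proof (rule nth_equalityI)
    show "length x = length (rotate j z)" using mneq by simp
    fix i assume "i < length x"
    then show "x ! i = rotate j z ! i"
      using xz closed nth_rotate[of i z j] mneq by simp
  qed
  show ?thesis
  proof (cases "j = 0")
    case True
    then show ?thesis unfolding cyc_equiv_def using xrot n1
      by (intro exI[of _ ?n]) simp
  next
    case False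
    then show ?thesis unfolding cyc_equiv_def using xrot j rotate_drop_take[of j z]
      by (intro exI[of _ j]) simp
  qed
qed

theorem proposition5p14:
  fixes s r :: "'e \<Rightarrow> 'v" and sp :: "'v \<Rightarrow> 'e" and x z :: "'e dedge list"
  assumes "row_finite s" and "special_choice s sp"
    and "x \<in> Xc s r" and "z \<in> Xc s r"
  shows "erg_iso (Fx s r sp x) (Fx s r sp z) \<longleftrightarrow> cyc_equiv x z"
proof
  have xne: "x \<noteq> []" and zne: "z \<noteq> []" using assms(3,4) by (auto simp: Xc_def dpath_def)
  show "erg_iso (Fx s r sp x) (Fx s r sp z) \<Longrightarrow> cyc_equiv x z"
    using iso_cyc[OF xne zne] by blast
  assume "cyc_equiv x z"
  then obtain k where k: "1 \<le> k" "k \<le> length z" "x = drop k z @ take k z"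
    unfolding cyc_equiv_def by blast
  have "x = rotate k z"
  proof (cases "k = length z")
    case True then show ?thesis using k rotate_drop_take[of k z] by simp
  next
    case False then show ?thesis using k rotate_drop_take[of k z] by simp
  qed
  then have "length x = length z" "\<forall>i<length z. x ! i = z ! ((i + k) mod length z)"
    by (simp_all add: nth_rotate add.commute)
  then show "erg_iso (Fx s r sp x) (Fx s r sp z)" using shift_iso[of x z k s r sp] zne by simp
qed

end
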